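(* Fix a time frame $t$ and a time slot $\tau\in\{tK,tK+1,\dots,tK+K-1\}$, and consider the setting described in the context, with all data fixed except the decision variables of the respective problem. Then each of the following four optimization problems is a convex optimization problem, i.e. its feasible set is convex and its objective function is convex on it. $\mathcal{P}_{5-1}$ (variables $y_i(\tau)\in[0,1]$, $i\in\mathcal I$; $b_i(\tau),f_i(\tau),z_i(\tau)$ fixed): minimize $\sum_{i\in\mathcal I}H_i(\tau)z_i(\tau)\sum_{m\in\mathcal M}\big(T^{ul}_{i,m}(\tau)+T^{ud}_{i,m}(\tau)\big)+E(\tau)\sum_{i\in\mathcal I}\sum_{m\in\mathcal M}z_i(\tau)\big(E^{ul}_{i,m}(\tau)+E^{ud}_{i,m}(\tau)\big)-V\sum_{i\in\mathcal I}A_i(\tau)$. $\mathcal{P}_{5-2}$ (variables $b_i(\tau)\in(0,1]$, $i\in\mathcal I$; $y_i(\tau),f_i(\tau),z_i(\tau)$ fixed): minimize $\sum_{i\in\mathcal I}H_i(\tau)z_i(\tau)\sum_{m\in\mathcal M}\big(T^{ul}_{i,m}(\tau)+T^{ofld}_{i,m}(\tau)\big)+E(\tau)\sum_{i\in\mathcal I}\sum_{m\in\mathcal M}z_i(\tau)\big(E^{ul}_{i,m}(\tau)+E^{ofld}_{i,m}(\tau)\big)$ subject to $\sum_{i\in\mathcal I}a_{i,m}(t)b_i(\tau)\le 1$ for all $m\in\mathcal M$. $\mathcal{P}_{5-3}$ (variables $f_i(\tau)\in(0,1]$, $i\in\mathcal I$; $y_i(\tau),b_i(\tau),z_i(\tau)$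 fixed): minimize $\sum_{i\in\mathcal I}H_i(\tau)\Big(\sum_{m\in\mathcal M}T^{pl}_{i,m}(t)/K+z_i(\tau)\sum_{m\in\mathcal M}T^{ud}_{i,m}(\tau)+T^{exec}_i(\tau)\Big)+E(\tau)\sum_{i\in\mathcal I}\Big(\sum_{m\in\mathcal M}E^{pl}_{i,m}(t)/K+\sum_{m\in\mathcal M}z_i(\tau)E^{ud}_{i,m}(\tau)+E^{exec}_i(\tau)\Big)$ subject to $\sum_{i\in\mathcal I}a_{i,m}(t)f_i(\tau)\le 1$ for all $m\in\mathcal M$. $\mathcal{P}_{5-4}$ (variables $z_i(\tau)\in[0,1]$, $i\in\mathcal I$; $y_i(\tau),b_i(\tau),f_i(\tau)$ fixed): minimize $\sum_{i\in\mathcal I}H_i(\tau)\Big[z_i(\tau)\sum_{m\in\mathcal M}\big(T^{ul}_{i,m}(\tau)+T^{ud}_{i,m}(\tau)+T^{ofld}_{i,m}(\tau)\big)+T^{exec}_i(\tau)\Big]+E(\tau)\sum_{i\in\mathcal I}\Big[\sum_{m\in\mathcal M}z_i(\tau)\big(E^{ul}_{i,m}(\tau)+E^{ud}_{i,m}(\tau)+E^{ofld}_{i,m}(\tau)\big)+E^{exec}_i(\tau)\Big]-V\sum_{i\in\mathcal I}A_i(\tau)$.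
   Context: Finite sets $\mathcal I$ (users, "physical twins") and $\mathcal M$ (edge servers). $K$ is a positive integer. Fixed nonnegative constants: queue backlogs $H_i(\tau)\ge0$ ($i\in\mathcal I$) and $E(\tau)\ge 0$; $V>0$. Fixed access indicators $a_{i,m}(t)\in\{0,1\}$ with $\sum_{m}a_{i,m}(t)\le 1$ for each $i$, and fixed granularities $x_i(t)\in[0,1]$. Positive constants: $D_i(t),S_i(\tau),\lambda_i(\tau),p_i,C_i,F_i,\rho_i$ for $i\in\mathcal I$; $C_m,F_m,\rho_m,B_m$ for $m\in\mathcal M$; $N_0>0$; distances $S_{i,m}(\tau)>0$; path-loss exponent $\theta\ge 2$; complex fading coefficients $h_{i,m}(\tau)$; a constant $g_i^{local}\in[0,1]$. The decision variables (when not optimized in the given problem they are fixed constants in the same ranges) are $y_i(\tau)\in[0,1]$, $b_i(\tau)\in(0,1]$, $f_i(\tau)\in(0,1]$, $z_i(\tau)\in[0,1]$. The quantity $f_i(tK)$ equals the variable $f_i(\tau)$ if $\tau=tK$, and is otherwise a fixed constant in $(0,1]$. Definitions: transmission rate $r_{i,m}(\tau)=a_{i,m}(t)b_i(\tau)B_m\log\!\Big(1+\frac{(S_{i,m}(\tau))^\theta p_i|h_{i,m}(\tau)|^2}{N_0 b_i(\tau)B_m}\Big)$; $T^{ul}_{i,m}(\tau)=\frac{y_i(\tau)S_i(\tau)}{r_{i,m}(\tau)}$, $E^{ul}_{i,m}(\tau)=p_iT^{ul}_{i,m}(\tau)$; $T^{ofld}_{i,m}(\tau)=\frac{\lambda_i(\tau)}{r_{i,m}(\tau)}$,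 $E^{ofld}_{i,m}(\tau)=p_iT^{ofld}_{i,m}(\tau)$; (convention: when $a_{i,m}(t)=0$, the terms $T^{ul}_{i,m},E^{ul}_{i,m},T^{ofld}_{i,m},E^{ofld}_{i,m}$ are taken to be $0$); $T^{ud}_{i,m}(\tau)=\frac{a_{i,m}(t)y_i(\tau)S_i(\tau)C_m}{f_i(\tau)F_m}$, $E^{ud}_{i,m}(\tau)=\rho_mf_i(\tau)F_m^3T^{ud}_{i,m}(\tau)$; $T^{pl}_{i,m}(t)=\frac{a_{i,m}(t)x_i(t)D_i(t)C_m}{f_i(tK)F_m}$, $E^{pl}_{i,m}(t)=\rho_mf_i(tK)F_m^3T^{pl}_{i,m}(t)$; $T^{exec}_i(\tau)=\sum_{m}a_{i,m}(t)z_i(\tau)\frac{\lambda_i(\tau)C_m}{f_i(\tau)F_m}+(1-z_i(\tau))\frac{\lambda_i(\tau)C_i}{F_i}$; $E^{exec}_i(\tau)=\sum_m a_{i,m}(t)z_i(\tau)\rho_mF_m^2\lambda_i(\tau)C_m+(1-z_i(\tau))\rho_iF_i^2\lambda_i(\tau)C_i$; accuracy $A_i(\tau)=z_i(\tau)g_i^{edge}(d_i(\tau))+(1-z_i(\tau))g_i^{local}$ with $d_i(\tau)=x_i(t)D_i(t)+y_i(\tau)S_i(\tau)$ and $g_i^{edge}(d)=1-\big(1-\frac{d}{D_i(t)+S_i(\tau)}\big)^2$. *)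

theory Defs
  imports "HOL-Analysis.Analysis"
begin

text \<open>System data for one fixed time frame t and slot tau. Users are the finite
type 'i, edge servers the finite type 'm. All quantities indexed by t or tau are
the (fixed) values at that frame / slot.\<close>

record ('i, 'm) dt_sys =
  sK     :: nat
  sH     :: "'i \<Rightarrow> real"
  sE     :: real
  sV     :: real
  sa     :: "'i \<Rightarrow> 'm \<Rightarrow> real"
  sx     :: "'i \<Rightarrow> real"
  sD     :: "'i \<Rightarrow> real"
  sS     :: "'i \<Rightarrow> real"
  slam   :: "'i \<Rightarrow> real"
  sp     :: "'i \<Rightarrow> real"
  sCi    :: "'i \<Rightarrow> real"
  sFi    :: "'i \<Rightarrow> real"
  srhoi  :: "'i \<Rightarrow> real"
  sCm    :: "'m \<Rightarrow> real"
  sFm    :: "'m \<Rightarrow> real"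
  srhom  :: "'m \<Rightarrow> real"
  sB     :: "'m \<Rightarrow> real"
  sN0    :: real
  sdist  :: "'i \<Rightarrow> 'm \<Rightarrow> real"        \<comment> \<open>S_{i,m}(tau)\<close>
  stheta :: real
  sh     :: "'i \<Rightarrow> 'm \<Rightarrow> complex"
  sgloc  :: "'i \<Rightarrow> real"
  sfK    :: "'i \<Rightarrow> real"                \<comment> \<open>fixed value of f_i(tK) when tau is not tK\<close>

definition standing :: "('i, 'm) dt_sys \<Rightarrow> bool" where
  "standing P \<longleftrightarrow>
     sK P > 0 \<and> (\<forall>i. sH P i \<ge> 0) \<and> sE P \<ge> 0 \<and> sV P > 0 \<and>
     (\<forall>i m. sa P i m = 0 \<or> sa P i m = 1) \<and> (\<forall>i. (\<Sum>m\<in>UNIV. sa P i m) \<le> 1) \<and>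
     (\<forall>i. 0 \<le> sx P i \<and> sx P i \<le> 1) \<and>
     (\<forall>i. sD P i > 0 \<and> sS P i > 0 \<and> slam P i > 0 \<and> sp P i > 0 \<and>
          sCi P i > 0 \<and> sFi P i > 0 \<and> srhoi P i > 0) \<and>
     (\<forall>m. sCm P m > 0 \<and> sFm P m > 0 \<and> srhom P m > 0 \<and> sB P m > 0) \<and>
     sN0 P > 0 \<and> (\<forall>i m. sdist P i m > 0) \<and> stheta P \<ge> 2 \<and>
     (\<forall>i. 0 \<le> sgloc P i \<and> sgloc P i \<le> 1) \<and>
     (\<forall>i. 0 < sfK P i \<and> sfK P i \<le> 1)"

text \<open>Transmission rate r_{i,m}(tau) as a function of b_i(tau) (natural log).\<close>
definition rate :: "('i, 'm) dt_sys \<Rightarrow> real \<Rightarrow> 'i \<Rightarrow> 'm \<Rightarrow> real" where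
  "rate P b i m = sa P i m * b * sB P m *
     ln (1 + (sdist P i m) powr (stheta P) * sp P i * (cmod (sh P i m))\<^sup>2 / (sN0 P * b * sB P m))"

definition Tul :: "('i, 'm) dt_sys \<Rightarrow> real \<Rightarrow> real \<Rightarrow> 'i \<Rightarrow> 'm \<Rightarrow> real" where
  "Tul P y b i m = (if sa P i m = 0 then 0 else y * sS P i / rate P b i m)"

definition Eul :: "('i, 'm) dt_sys \<Rightarrow> real \<Rightarrow> real \<Rightarrow> 'i \<Rightarrow> 'm \<Rightarrow> real" where
  "Eul P y b i m = (if sa P i m = 0 then 0 else sp P i * Tul P y b i m)"

definition Tofld :: "('i, 'm) dt_sys \<Rightarrow> real \<Rightarrow> 'i \<Rightarrow> 'm \<Rightarrow> real" where
  "Tofld P b i m = (if sa P i m = 0 then 0 else slam P i / rate P b i m)"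

definition Eofld :: "('i, 'm) dt_sys \<Rightarrow> real \<Rightarrow> 'i \<Rightarrow> 'm \<Rightarrow> real" where
  "Eofld P b i m = (if sa P i m = 0 then 0 else sp P i * Tofld P b i m)"

definition Tud :: "('i, 'm) dt_sys \<Rightarrow> real \<Rightarrow> real \<Rightarrow> 'i \<Rightarrow> 'm \<Rightarrow> real" where
  "Tud P y f i m = sa P i m * y * sS P i * sCm P m / (f * sFm P m)"

definition Eud :: "('i, 'm) dt_sys \<Rightarrow> real \<Rightarrow> real \<Rightarrow> 'i \<Rightarrow> 'm \<Rightarrow> real" where
  "Eud P y f i m = srhom P m * f * (sFm P m)^3 * Tud P y f i m"

text \<open>T^pl and E^pl, as functions of the value fK = f_i(tK).\<close>
definition Tpl :: "('i, 'm) dt_sys \<Rightarrow> real \<Rightarrow> 'i \<Rightarrow> 'm \<Rightarrow> real" where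
  "Tpl P fK i m = sa P i m * sx P i * sD P i * sCm P m / (fK * sFm P m)"

definition Epl :: "('i, 'm) dt_sys \<Rightarrow> real \<Rightarrow> 'i \<Rightarrow> 'm \<Rightarrow> real" where
  "Epl P fK i m = srhom P m * fK * (sFm P m)^3 * Tpl P fK i m"

definition Texec :: "('i::finite, 'm::finite) dt_sys \<Rightarrow> real \<Rightarrow> real \<Rightarrow> 'i \<Rightarrow> real" where
  "Texec P z f i = (\<Sum>m\<in>UNIV. sa P i m * z * (slam P i * sCm P m / (f * sFm P m)))
                   + (1 - z) * (slam P i * sCi P i / sFi P i)"

definition Eexec :: "('i::finite, 'm::finite) dt_sys \<Rightarrow> real \<Rightarrow> 'i \<Rightarrow> real" where
  "Eexec P z i = (\<Sum>m\<in>UNIV. sa P i m * z * srhom P m * (sFm P m)^2 * slam P i * sCm P m)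
                 + (1 - z) * srhoi P i * (sFi P i)^2 * slam P i * sCi P i"

definition g_edge :: "('i, 'm) dt_sys \<Rightarrow> 'i \<Rightarrow> real \<Rightarrow> real" where
  "g_edge P i d = 1 - (1 - d / (sD P i + sS P i))\<^sup>2"

definition acc :: "('i, 'm) dt_sys \<Rightarrow> real \<Rightarrow> real \<Rightarrow> 'i \<Rightarrow> real" where
  "acc P y z i = z * g_edge P i (sx P i * sD P i + y * sS P i) + (1 - z) * sgloc P i"

definition fTK :: "('i, 'm) dt_sys \<Rightarrow> nat \<Rightarrow> nat \<Rightarrow> real \<Rightarrow> 'i \<Rightarrow> real" where
  "fTK P t tau f i = (if tau = t * sK P then f else sfK P i)"

definition obj51 :: "('i::finite, 'm::finite) dt_sys \<Rightarrow> real^'i \<Rightarrow> real^'i \<Rightarrow> real^'i \<Rightarrow> real^'i \<Rightarrow> real" where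
  "obj51 P y b f z =
     (\<Sum>i\<in>UNIV. sH P i * z$i * (\<Sum>m\<in>UNIV. Tul P (y$i) (b$i) i m + Tud P (y$i) (f$i) i m))
     + sE P * (\<Sum>i\<in>UNIV. \<Sum>m\<in>UNIV. z$i * (Eul P (y$i) (b$i) i m + Eud P (y$i) (f$i) i m))
     - sV P * (\<Sum>i\<in>UNIV. acc P (y$i) (z$i) i)"

definition obj52 :: "('i::finite, 'm::finite) dt_sys \<Rightarrow> real^'i \<Rightarrow> real^'i \<Rightarrow> real^'i \<Rightarrow> real^'i \<Rightarrow> real" where
  "obj52 P y b f z =
     (\<Sum>i\<in>UNIV. sH P i * z$i * (\<Sum>m\<in>UNIV. Tul P (y$i) (b$i) i m + Tofld P (b$i) i m))
     + sE P * (\<Sum>i\<in>UNIV. \<Sum>m\<in>UNIV. z$i * (Eul P (y$i) (b$i) i m + Eofld P (b$i) i m))"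

definition obj53 :: "('i::finite, 'm::finite) dt_sys \<Rightarrow> nat \<Rightarrow> nat \<Rightarrow> real^'i \<Rightarrow> real^'i \<Rightarrow> real^'i \<Rightarrow> real^'i \<Rightarrow> real" where
  "obj53 P t tau y b f z =
     (\<Sum>i\<in>UNIV. sH P i *
        ((\<Sum>m\<in>UNIV. Tpl P (fTK P t tau (f$i) i) i m) / real (sK P)
         + z$i * (\<Sum>m\<in>UNIV. Tud P (y$i) (f$i) i m) + Texec P (z$i) (f$i) i))
     + sE P * (\<Sum>i\<in>UNIV.
        (\<Sum>m\<in>UNIV. Epl P (fTK P t tau (f$i) i) i m) / real (sK P)
         + (\<Sum>m\<in>UNIV. z$i * Eud P (y$i) (f$i) i m) + Eexec P (z$i) i)"

definition obj54 :: "('i::finite, 'm::finite) dt_sys \<Rightarrow> real^'i \<Rightarrow> real^'i \<Rightarrow> real^'i \<Rightarrow> real^'i \<Rightarrow> real" where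
  "obj54 P y b f z =
     (\<Sum>i\<in>UNIV. sH P i * (z$i * (\<Sum>m\<in>UNIV. Tul P (y$i) (b$i) i m + Tud P (y$i) (f$i) i m
                                             + Tofld P (b$i) i m) + Texec P (z$i) (f$i) i))
     + sE P * (\<Sum>i\<in>UNIV. (\<Sum>m\<in>UNIV. z$i * (Eul P (y$i) (b$i) i m + Eud P (y$i) (f$i) i m
                                             + Eofld P (b$i) i m)) + Eexec P (z$i) i)
     - sV P * (\<Sum>i\<in>UNIV. acc P (y$i) (z$i) i)"

definition feas_unit :: "(real^'i) set" where
  "feas_unit = {v. \<forall>i. 0 \<le> v$i \<and> v$i \<le> 1}"

definition feas_coupled :: "('i::finite, 'm::finite) dt_sys \<Rightarrow> (real^'i) set" where
  "feas_coupled P = {v. (\<forall>i. 0 < v$i \<and> v$i \<le> 1) \<and> (\<forall>m. (\<Sum>i\<in>UNIV. sa P i m * v$i) \<le> 1)}"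

end

theory Submission
  imports Defs
begin

lemma convex_on_cong':
  assumes "convex_on S g" "\<And>x. x \<in> S \<Longrightarrow> h x = g x"
  shows "convex_on S h"
  using assms unfolding convex_on_def convex_def
  by (smt (verit))

lemma conv_sum:
  assumes "finite I" "convex A" "\<And>i. i \<in> I \<Longrightarrow> convex_on A (h i)"
  shows "convex_on A (\<lambda>x. \<Sum>i\<in>I. h i x)"
  using assms
proof (induction I rule: finite_induct)
  case empty
  then show ?case by (simp add: convex_on_const)
next
  case (insert a F)
  then show ?case by (simp add: convex_on_add)
qed

lemma conv_coord:
  fixes A :: "(real^'n) set"
  assumes "convex A" "convex_on S g" "\<And>v. v \<in> A \<Longrightarrow> v$i \<in> S"
  shows "convex_on A (\<lambda>v. g (v$i))"
  unfolding convex_on_def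
proof (intro conjI ballI allI impI)
  show "convex A" by fact
  fix x y u v :: "_"
  assume xy: "x \<in> A" "y \<in> A" and uv: "0 \<le> (u::real)" "0 \<le> (v::real)" "u + v = 1"
  have cv: "\<forall>x\<in>S. \<forall>y\<in>S. \<forall>u\<ge>0. \<forall>v\<ge>0. u + v = 1 \<longrightarrow> g (u *\<^sub>R x + v *\<^sub>R y) \<le> u * g x + v * g y"
    using assms(2) unfolding convex_on_def by (rule conjunct2)
  have "g (u *\<^sub>R x$i + v *\<^sub>R y$i) \<le> u * g (x$i) + v * g (y$i)"
    using cv assms(3)[OF xy(1)] assms(3)[OF xy(2)] uv by simp
  then show "g ((u *\<^sub>R x + v *\<^sub>R y) $ i) \<le> u * g (x $ i) + v * g (y $ i)" by simp
qed

lemma conv_coord_sum: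
  fixes A :: "(real^'n) set"
  assumes "convex A" "\<And>i. convex_on S (g i)" "\<And>v i. v \<in> A \<Longrightarrow> v$i \<in> S"
  shows "convex_on A (\<lambda>v. \<Sum>i\<in>UNIV. g i (v$i))"
  by (rule conv_sum) (auto intro: conv_coord assms)

definition affr :: "(real \<Rightarrow> real) \<Rightarrow> bool" where
  "affr h \<longleftrightarrow> (\<forall>x y t. h ((1-t) * x + t * y) = (1-t) * h x + t * h y)"

lemma affr_const: "affr (\<lambda>s. c)"
  unfolding affr_def by (simp add: algebra_simps)
lemma affr_id: "affr (\<lambda>s. s)"
  unfolding affr_def by simp
lemma affr_add: "affr f \<Longrightarrow> affr g \<Longrightarrow> affr (\<lambda>s. f s + g s)"
  unfolding affr_def by (simp add: distrib_left)
lemma affr_diff: "affr f \<Longrightarrow> affr g \<Longrightarrow> affr (\<lambda>s. f s - g s)"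
  unfolding affr_def by (simp add: right_diff_distrib)
lemma affr_cmul: "affr f \<Longrightarrow> affr (\<lambda>s. c * f s)"
  unfolding affr_def
proof (intro allI)
  fix x y t assume "\<forall>x y t. f ((1 - t) * x + t * y) = (1 - t) * f x + t * f y"
  then have "f ((1 - t) * x + t * y) = (1 - t) * f x + t * f y" by blast
  then show "c * f ((1 - t) * x + t * y) = (1 - t) * (c * f x) + t * (c * f y)"
    by (simp only:) (simp add: algebra_simps)
qed
lemma affr_mulc: "affr f \<Longrightarrow> affr (\<lambda>s. f s * c)"
  using affr_cmul[of f c] by (simp add: mult.commute)
lemma affr_divc: "affr f \<Longrightarrow> affr (\<lambda>s. f s / c)"
  unfolding affr_def by (simp add: add_divide_distrib)
lemma affr_if: "affr f \<Longrightarrow> affr g \<Longrightarrow> affr (\<lambda>s. if c then f s else g s)"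
  by (cases c) simp_all
lemma affr_sum: "(\<And>m. affr (\<lambda>s. F m s)) \<Longrightarrow> affr (\<lambda>s. \<Sum>m\<in>I. F m s)"
  unfolding affr_def by (simp add: sum_distrib_left sum.distrib)

lemmas affr_intros = affr_const affr_id affr_add affr_diff affr_cmul affr_mulc affr_divc affr_if affr_sum

lemma affr_convex: "affr h \<Longrightarrow> convex_on UNIV h"
  by (rule convex_onI) (auto simp: affr_def)

lemma quad_convex:
  fixes c p q d :: real
  shows "0 \<le> c \<Longrightarrow> convex_on UNIV (\<lambda>s. c * (p + q * s)\<^sup>2 + d)"
proof (rule convex_onI)
  fix t x y :: real
  assume c: "0 \<le> c" and t: "0 < t" "t < 1"
  have "(1-t) * (c * (p + q * x)^2 + d) + t * (c * (p + q * y)^2 + d) - (c * (p + q * ((1-t) * x + t * y))^2 + d)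
        = c * (t * (1-t)) * (q * (x-y))^2"
    by (simp add: power2_eq_square algebra_simps)
  also have "\<dots> \<ge> 0" using c t by simp
  finally show "c * (p + q * ((1 - t) *\<^sub>R x + t *\<^sub>R y))\<^sup>2 + d \<le> (1 - t) * (c * (p + q * x)\<^sup>2 + d) + t * (c * (p + q * y)\<^sup>2 + d)"
    by simp
qed simp

lemma persp_concave:
  assumes "0 \<le> c"
  shows "concave_on {0<..} (\<lambda>s::real. s * ln (1 + c / s))"
  unfolding concave_on_iff
proof (intro conjI ballI allI impI)
  show "convex {0::real<..}" by simp
  fix x y u v :: real
  assume x: "x \<in> {0<..}" and y: "y \<in> {0<..}" and uv: "0 \<le> u" "0 \<le> v" "u + v = 1"
  define w where "w = u * x + v * y"
  have w: "w > 0" using x y uv unfolding w_def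
    by (cases "u = 0") (auto intro!: add_pos_nonneg)
  define \<alpha> where "\<alpha> = u * x/w"
  define \<beta> where "\<beta> = v * y/w"
  have ab: "\<alpha> \<ge> 0" "\<beta> \<ge> 0" "\<alpha> + \<beta> = 1"
    using x y uv w unfolding \<alpha>_def \<beta>_def w_def by (auto simp: add_divide_distrib[symmetric])
  have px: "1 + c/x \<in> {0<..}" using x assms by (simp add: add_pos_nonneg)
  have py: "1 + c/y \<in> {0<..}" using y assms by (simp add: add_pos_nonneg)
  have "ln (\<alpha> * (1 + c/x) + \<beta> * (1 + c/y)) \<ge> \<alpha> * ln (1 + c/x) + \<beta> * ln (1 + c/y)"
    using ln_concave px py ab unfolding concave_on_iff by simp
  moreover have "\<alpha> * (1 + c/x) + \<beta> * (1 + c/y) = 1 + c / w"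
  proof -
    have e1: "\<alpha> * (1 + c/x) = (u * x + u * c) / w"
      using x w unfolding \<alpha>_def by (simp add: field_simps)
    have e2: "\<beta> * (1 + c/y) = (v * y + v * c) / w"
      using y w unfolding \<beta>_def by (simp add: field_simps)
    have "(u * x + u * c) / w + (v * y + v * c) / w = (w + (u + v) * c) / w"
      unfolding w_def by (simp add: add_divide_distrib[symmetric] algebra_simps)
    also have "\<dots> = 1 + c / w" using w uv by (simp add: add_divide_distrib)
    finally show ?thesis using e1 e2 by simp
  qed
  ultimately have "w * ln (1 + c/w) \<ge> w * (\<alpha> * ln (1 + c/x) + \<beta> * ln (1 + c/y))"
    using w by (simp add: mult_left_mono)
  also have "w * (\<alpha> * ln (1 + c/x) + \<beta> * ln (1 + c/y)) = u * (x * ln (1 + c/x)) + v * (y * ln (1 + c/y))"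
    using w unfolding \<alpha>_def \<beta>_def by (simp add: field_simps)
  finally show "u * (x * ln (1 + c / x)) + v * (y * ln (1 + c / y)) \<le> (u *\<^sub>R x + v *\<^sub>R y) * ln (1 + c / (u *\<^sub>R x + v *\<^sub>R y))"
    by (simp add: w_def)
qed

lemma inv_concave:
  fixes S :: "real set"
  assumes "concave_on S g" "\<And>x. x \<in> S \<Longrightarrow> g x > 0" "0 \<le> k"
  shows "convex_on S (\<lambda>x. k / g x)"
  unfolding convex_on_def
proof (intro conjI ballI allI impI)
  show "convex S" using assms(1) concave_on_imp_convex by blast
  fix x y u v :: real
  assume xy: "x \<in> S" "y \<in> S" and uv: "0 \<le> u" "0 \<le> v" "u + v = 1"
  have gx: "g x > 0" and gy: "g y > 0" using assms(2) xy by auto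
  have c1: "g (u *\<^sub>R x + v *\<^sub>R y) \<ge> u * g x + v * g y"
    using assms(1) xy uv unfolding concave_on_iff by blast
  have pos: "u * g x + v * g y > 0" using gx gy uv
    by (cases "u = 0") (auto intro!: add_pos_nonneg)
  have "k / g (u *\<^sub>R x + v *\<^sub>R y) \<le> k / (u * g x + v * g y)"
    using c1 pos assms(3) by (simp add: divide_left_mono)
  also have iv: "inverse (u * g x + v * g y) \<le> u * inverse (g x) + v * inverse (g y)"
    using convex_on_inverse[of "{0<..}"] gx gy uv unfolding convex_on_def by simp
  have "k / (u * g x + v * g y) \<le> u * (k / g x) + v * (k / g y)"
    using assms(3) mult_left_mono[OF iv assms(3)] by (simp add: divide_inverse algebra_simps)
  finally show "k / g (u *\<^sub>R x + v *\<^sub>R y) \<le> u * (k / g x) + v * (k / g y)" .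
qed


lemma convex_unit: "convex (feas_unit :: (real^'n) set)"
  unfolding convex_def feas_unit_def
proof (intro ballI allI impI)
  fix x y :: "real^'n" and u v :: real
  assume x: "x \<in> {v. \<forall>i. 0 \<le> v $ i \<and> v $ i \<le> 1}" and y: "y \<in> {v. \<forall>i. 0 \<le> v $ i \<and> v $ i \<le> 1}"
    and uv: "0 \<le> u" "0 \<le> v" "u + v = 1"
  {
    fix i
    have a: "u * x$i \<le> u" using x uv by (simp add: mult_left_le)
    have b: "v * y$i \<le> v" using y uv by (simp add: mult_left_le)
    have "0 \<le> u * x $ i + v * y $ i \<and> u * x $ i + v * y $ i \<le> 1"
      using a b x y uv by simp
  }
  then show "u *\<^sub>R x + v *\<^sub>R y \<in> {v. \<forall>i. 0 \<le> v $ i \<and> v $ i \<le> 1}" by simp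
qed

lemma convex_coupled: "convex (feas_coupled (P :: ('i::finite,'m::finite) dt_sys))"
  unfolding convex_def
proof (intro ballI allI impI)
  fix x y :: "real^'i" and u v :: real
  assume xs: "x \<in> feas_coupled P" and ys: "y \<in> feas_coupled P"
    and uv: "0 \<le> u" "0 \<le> v" "u + v = 1"
  have x: "(\<forall>i. 0 < x $ i \<and> x $ i \<le> 1) \<and> (\<forall>m. (\<Sum>i\<in>UNIV. sa P i m * x $ i) \<le> 1)"
    using xs unfolding feas_coupled_def by simp
  have y: "(\<forall>i. 0 < y $ i \<and> y $ i \<le> 1) \<and> (\<forall>m. (\<Sum>i\<in>UNIV. sa P i m * y $ i) \<le> 1)"
    using ys unfolding feas_coupled_def by simp
  have part1: "\<forall>i. 0 < u * x $ i + v * y $ i \<and> u * x $ i + v * y $ i \<le> 1"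
  proof
    fix i
    have a: "u * x$i \<le> u" using x uv by (simp add: mult_left_le)
    have b: "v * y$i \<le> v" using y uv by (simp add: mult_left_le)
    have n1: "0 \<le> u * x $ i" using x uv by (simp add: less_imp_le)
    have n2: "0 \<le> v * y $ i" using y uv by (simp add: less_imp_le)
    have "0 < u * x $ i \<or> 0 < v * y $ i" using x y uv by (cases "u = 0") auto
    then have p: "0 < u * x $ i + v * y $ i" using n1 n2 by auto
    show "0 < u * x $ i + v * y $ i \<and> u * x $ i + v * y $ i \<le> 1"
      using a b p uv by simp
  qed
  have part2: "\<forall>m. (\<Sum>i\<in>UNIV. sa P i m * (u * x $ i + v * y $ i)) \<le> 1"
  proof
    fix m
    have "(\<Sum>i\<in>UNIV. sa P i m * (u * x $ i + v * y $ i))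
        = u * (\<Sum>i\<in>UNIV. sa P i m * x $ i) + v * (\<Sum>i\<in>UNIV. sa P i m * y $ i)"
      by (simp add: sum_distrib_left sum.distrib algebra_simps)
    also have "\<dots> \<le> u * 1 + v * 1"
      using x y uv by (intro add_mono mult_left_mono) auto
    finally show "(\<Sum>i\<in>UNIV. sa P i m * (u * x $ i + v * y $ i)) \<le> 1" using uv by simp
  qed
  from part1 part2 have "(\<forall>i. 0 < u * x $ i + v * y $ i \<and> u * x $ i + v * y $ i \<le> 1) \<and>
        (\<forall>m. (\<Sum>i\<in>UNIV. sa P i m * (u * x $ i + v * y $ i)) \<le> 1)" by blast
  then show "u *\<^sub>R x + v *\<^sub>R y \<in> feas_coupled P" unfolding feas_coupled_def by simp
qed

lemma p51_coord:
  fixes P :: "('i::finite,'m::finite) dt_sys"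
  assumes st: "standing P" and zi: "0 \<le> zi"
  shows "convex_on UNIV (\<lambda>s. sH P i * zi * (\<Sum>m\<in>UNIV. Tul P s bi i m + Tud P s fi i m)
     + sE P * (\<Sum>m\<in>UNIV. zi * (Eul P s bi i m + Eud P s fi i m)) - sV P * acc P s zi i)"
proof -
  have A: "affr (\<lambda>s. sH P i * zi * (\<Sum>m\<in>UNIV. Tul P s bi i m + Tud P s fi i m)
     + sE P * (\<Sum>m\<in>UNIV. zi * (Eul P s bi i m + Eud P s fi i m)))"
    unfolding Tul_def Tud_def Eul_def Eud_def by (intro affr_intros)
  define p where "p = 1 - sx P i * sD P i / (sD P i + sS P i)"
  define q where "q = - (sS P i / (sD P i + sS P i))"
  have lin: "1 - (sx P i * sD P i + s * sS P i) / (sD P i + sS P i) = p + q * s" for s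
    unfolding p_def q_def by (simp add: add_divide_distrib)
  have Q: "convex_on UNIV (\<lambda>s. - acc P s zi i)"
  proof (rule convex_on_cong')
    show "convex_on UNIV (\<lambda>s. zi * (p + q * s)\<^sup>2 + (- zi - (1 - zi) * sgloc P i))"
      using zi by (rule quad_convex)
    fix s :: real
    show "- acc P s zi i = zi * (p + q * s)\<^sup>2 + (- zi - (1 - zi) * sgloc P i)"
      unfolding acc_def g_edge_def lin by (simp add: algebra_simps)
  qed
  have V: "0 \<le> sV P" using st unfolding standing_def by auto
  show ?thesis
  proof (rule convex_on_cong')
    show "convex_on UNIV (\<lambda>s. (sH P i * zi * (\<Sum>m\<in>UNIV. Tul P s bi i m + Tud P s fi i m)
     + sE P * (\<Sum>m\<in>UNIV. zi * (Eul P s bi i m + Eud P s fi i m))) + sV P * (- acc P s zi i))"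
      by (intro convex_on_add affr_convex[OF A] convex_on_cmul V Q)
  qed simp
qed

lemma p54_coord:
  fixes P :: "('i::finite,'m::finite) dt_sys"
  shows "convex_on UNIV (\<lambda>s. sH P i * (s * (\<Sum>m\<in>UNIV. Tul P yi bi i m + Tud P yi fi i m
                                             + Tofld P bi i m) + Texec P s fi i)
     + sE P * ((\<Sum>m\<in>UNIV. s * (Eul P yi bi i m + Eud P yi fi i m
                                             + Eofld P bi i m)) + Eexec P s i)
     - sV P * acc P yi s i)"
  unfolding Texec_def Eexec_def acc_def
  by (intro affr_convex affr_intros)


lemma rate_inv:
  fixes P :: "('i, 'm) dt_sys"
  assumes st: "standing P" and k: "0 \<le> k"
  shows "convex_on {0<..1} (\<lambda>s. if sa P i m = 0 then 0 else k / rate P s i m)"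
proof (cases "sa P i m = 0")
  case True
  then show ?thesis by (simp add: convex_on_const)
next
  case False
  then have a1: "sa P i m = 1" using st unfolding standing_def by blast
  have B: "sB P m > 0" "sN0 P > 0" "sp P i > 0" using st unfolding standing_def by auto
  define c where "c = sdist P i m powr stheta P * sp P i * (cmod (sh P i m))\<^sup>2 / (sN0 P * sB P m)"
  have c0: "0 \<le> c" unfolding c_def using B by simp
  have rate_eq: "rate P s i m = sB P m * (s * ln (1 + c / s))" for s
    unfolding rate_def c_def a1 by (simp add: mult_ac)
  show ?thesis
  proof (cases "c = 0")
    case True
    show ?thesis
    proof (rule convex_on_cong')
      show "convex_on {0<..(1::real)} (\<lambda>s. 0::real)" by (simp add: convex_on_const)
    qed (simp add: rate_eq True)
  next
    case False
    then have cp: "c > 0" using c0 by simp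
    have g: "concave_on {0<..1} (\<lambda>s. s * ln (1 + c / s))"
      using persp_concave[OF c0] unfolding concave_on_def
      by (rule convex_on_subset) auto
    have pos: "s * ln (1 + c / s) > 0" if "s \<in> {0<..1}" for s
      using that cp by (simp add: ln_gt_zero)
    have kB: "0 \<le> k / sB P m" using k B(1) by simp
    have "convex_on {0<..1} (\<lambda>s. (k / sB P m) / (s * ln (1 + c / s)))"
      using g pos kB by (rule inv_concave)
    then show ?thesis
      by (rule convex_on_cong') (simp add: False rate_eq a1)
  qed
qed

lemma p52_coord:
  fixes P :: "('i::finite,'m::finite) dt_sys"
  assumes st: "standing P" and yi: "0 \<le> yi" and zi: "0 \<le> zi"
  shows "convex_on {0<..1} (\<lambda>s. sH P i * zi * (\<Sum>m\<in>UNIV. Tul P yi s i m + Tofld P s i m)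
     + sE P * (\<Sum>m\<in>UNIV. zi * (Eul P yi s i m + Eofld P s i m)))"
proof -
  have pos: "sS P i > 0" "slam P i > 0" "sp P i > 0" "sH P i \<ge> 0" "sE P \<ge> 0"
    using st unfolding standing_def by auto
  have T: "convex_on {0<..1} (\<lambda>s. Tul P yi s i m)" for m
    using rate_inv[OF st, of "yi * sS P i" i m] yi pos
    by (rule_tac convex_on_cong') (auto simp: Tul_def)
  have TO: "convex_on {0<..1} (\<lambda>s. Tofld P s i m)" for m
    using rate_inv[OF st, of "slam P i" i m] pos
    by (rule_tac convex_on_cong') (auto simp: Tofld_def)
  have EU: "convex_on {0<..1} (\<lambda>s. Eul P yi s i m)" for m
  proof (rule convex_on_cong')
    show "convex_on {0<..1} (\<lambda>s. if sa P i m = 0 then 0 else sp P i * (yi * sS P i) / rate P s i m)"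
      using yi pos by (intro rate_inv[OF st]) simp
  qed (simp add: Eul_def Tul_def)
  have EO: "convex_on {0<..1} (\<lambda>s. Eofld P s i m)" for m
  proof (rule convex_on_cong')
    show "convex_on {0<..1} (\<lambda>s. if sa P i m = 0 then 0 else sp P i * slam P i / rate P s i m)"
      using pos by (intro rate_inv[OF st]) simp
  qed (simp add: Eofld_def Tofld_def)
  have HS: "0 \<le> sH P i * zi" using pos zi by simp
  have cS: "convex {0<..(1::real)}" by simp
  show ?thesis
    by (intro convex_on_add convex_on_cmul conv_sum T TO EU EO HS pos(5) zi finite_UNIV cS) simp_all
qed

lemma cinv:
  assumes "0 \<le> k" "\<And>s. 0 < s \<Longrightarrow> h s = k * inverse s + d"
  shows "convex_on {0<..1} h"
proof (rule convex_on_cong')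
  show "convex_on {0<..1} (\<lambda>s. k * inverse s + d)"
    by (intro convex_on_add convex_on_cmul assms(1) convex_on_inverse convex_on_const[THEN iffD2]) auto
qed (use assms(2) in auto)

lemma p53_coord:
  fixes P :: "('i::finite,'m::finite) dt_sys"
  assumes st: "standing P" and yi: "0 \<le> yi" and zi: "0 \<le> zi"
  shows "convex_on {0<..1} (\<lambda>s. sH P i *
        ((\<Sum>m\<in>UNIV. Tpl P (fTK P t tau s i) i m) / real (sK P)
         + zi * (\<Sum>m\<in>UNIV. Tud P yi s i m) + Texec P zi s i)
     + sE P * ((\<Sum>m\<in>UNIV. Epl P (fTK P t tau s i) i m) / real (sK P)
         + (\<Sum>m\<in>UNIV. zi * Eud P yi s i m) + Eexec P zi i))"
proof -
  have pos: "sH P i \<ge> 0" "sE P \<ge> 0" "sD P i > 0" "sS P i > 0" "slam P i > 0"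
    "0 \<le> sx P i" "real (sK P) \<ge> 0"
    using st unfolding standing_def by auto
  have posm: "sCm P m > 0" "sFm P m > 0" "srhom P m > 0" "0 \<le> sa P i m" for m
    using st unfolding standing_def by (auto, metis order_refl zero_le_one)
  have cS: "convex {0<..(1::real)}" by simp
  have TP: "convex_on {0<..1} (\<lambda>s. Tpl P (fTK P t tau s i) i m)" for m
  proof (cases "tau = t * sK P")
    case True
    show ?thesis
    proof (rule cinv[where k = "sa P i m * sx P i * sD P i * sCm P m / sFm P m" and d = 0])
      show "0 \<le> sa P i m * sx P i * sD P i * sCm P m / sFm P m"
        using pos posm[of m] by simp
      fix s :: real assume "0 < s"
      then show "Tpl P (fTK P t tau s i) i m = sa P i m * sx P i * sD P i * sCm P m / sFm P m * inverse s + 0"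
        using True posm[of m] by (simp add: Tpl_def fTK_def field_simps)
    qed
  next
    case False
    then show ?thesis by (simp add: fTK_def convex_on_const)
  qed
  have EP: "convex_on {0<..1} (\<lambda>s. Epl P (fTK P t tau s i) i m)" for m
  proof (cases "tau = t * sK P")
    case True
    show ?thesis
    proof (rule cinv[where k = 0 and d = "srhom P m * (sFm P m)^2 * sa P i m * sx P i * sD P i * sCm P m"])
      fix s :: real assume "0 < s"
      then show "Epl P (fTK P t tau s i) i m = 0 * inverse s + srhom P m * (sFm P m)^2 * sa P i m * sx P i * sD P i * sCm P m"
        using True posm[of m] by (simp add: Epl_def Tpl_def fTK_def field_simps power2_eq_square power3_eq_cube)
    qed simp
  next
    case False
    then show ?thesis by (simp add: fTK_def convex_on_const)
  qed
  have TU: "convex_on {0<..1} (\<lambda>s. Tud P yi s i m)" for m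
  proof (rule cinv[where k = "sa P i m * yi * sS P i * sCm P m / sFm P m" and d = 0])
    show "0 \<le> sa P i m * yi * sS P i * sCm P m / sFm P m"
      using pos posm[of m] yi by simp
    fix s :: real assume "0 < s"
    then show "Tud P yi s i m = sa P i m * yi * sS P i * sCm P m / sFm P m * inverse s + 0"
      using posm[of m] by (simp add: Tud_def field_simps)
  qed
  have EU: "convex_on {0<..1} (\<lambda>s. zi * Eud P yi s i m)" for m
  proof (rule cinv[where k = 0 and d = "zi * srhom P m * (sFm P m)^2 * sa P i m * yi * sS P i * sCm P m"])
    fix s :: real assume "0 < s"
    then show "zi * Eud P yi s i m = 0 * inverse s + zi * srhom P m * (sFm P m)^2 * sa P i m * yi * sS P i * sCm P m"
      using posm[of m] by (simp add: Eud_def Tud_def field_simps power2_eq_square power3_eq_cube)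
  qed simp
  have TE1: "convex_on {0<..1} (\<lambda>s. sa P i m * zi * (slam P i * sCm P m / (s * sFm P m)))" for m
  proof (rule cinv[where k = "sa P i m * zi * slam P i * sCm P m / sFm P m" and d = 0])
    show "0 \<le> sa P i m * zi * slam P i * sCm P m / sFm P m"
      using pos posm[of m] zi by simp
    fix s :: real assume "0 < s"
    then show "sa P i m * zi * (slam P i * sCm P m / (s * sFm P m)) = sa P i m * zi * slam P i * sCm P m / sFm P m * inverse s + 0"
      using posm[of m] by (simp add: field_simps)
  qed
  have TE: "convex_on {0<..1} (\<lambda>s. Texec P zi s i)"
    unfolding Texec_def
    by (intro convex_on_add conv_sum TE1 finite_UNIV cS convex_on_const[THEN iffD2]) simp
  show ?thesis
    by (intro convex_on_add convex_on_cmul convex_on_cdiv conv_sum TP EP TU EU TE zi pos finite_UNIV cS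
        convex_on_const[THEN iffD2]) auto
qed


theorem theorem2:
  fixes P :: "('i::finite, 'm::finite) dt_sys"
    and t tau :: nat
    and y b f z :: "real^'i"
  assumes "standing P"
    and "t * sK P \<le> tau" and "tau < t * sK P + sK P"
    and "\<forall>i. 0 \<le> y$i \<and> y$i \<le> 1"
    and "\<forall>i. 0 < b$i \<and> b$i \<le> 1"
    and "\<forall>i. 0 < f$i \<and> f$i \<le> 1"
    and "\<forall>i. 0 \<le> z$i \<and> z$i \<le> 1"
  shows "(convex feas_unit \<and> convex_on feas_unit (\<lambda>y'. obj51 P y' b f z))
       \<and> (convex (feas_coupled P) \<and> convex_on (feas_coupled P) (\<lambda>b'. obj52 P y b' f z))
       \<and> (convex (feas_coupled P) \<and> convex_on (feas_coupled P) (\<lambda>f'. obj53 P t tau y b f' z))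
       \<and> (convex feas_unit \<and> convex_on feas_unit (\<lambda>z'. obj54 P y b f z'))"
proof -
  note st = assms(1)
  have yz: "\<And>i. 0 \<le> y$i" "\<And>i. 0 \<le> z$i" using assms(4,7) by auto
  have cu: "convex (feas_unit :: (real^'i::finite) set)" by (rule convex_unit)
  have cc: "convex (feas_coupled P)" by (rule convex_coupled)
  have memc: "v $ i \<in> {0<..1}" if "v \<in> feas_coupled P" for v i
    using that unfolding feas_coupled_def by auto
  have c51: "convex_on feas_unit (\<lambda>y'. obj51 P y' b f z)"
  proof (rule convex_on_cong')
    show "convex_on feas_unit (\<lambda>v. \<Sum>i\<in>UNIV. (\<lambda>i s. sH P i * z$i * (\<Sum>m\<in>UNIV. Tul P s (b$i) i m + Tud P s (f$i) i m)
       + sE P * (\<Sum>m\<in>UNIV. z$i * (Eul P s (b$i) i m + Eud P s (f$i) i m)) - sV P * acc P s (z$i) i) i (v$i))"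
      by (rule conv_coord_sum[OF cu, where S = UNIV]) (auto intro: p51_coord[OF st] yz)
  qed (simp add: obj51_def sum.distrib sum_subtractf sum_distrib_left)
  have c52: "convex_on (feas_coupled P) (\<lambda>b'. obj52 P y b' f z)"
  proof (rule convex_on_cong')
    show "convex_on (feas_coupled P) (\<lambda>v. \<Sum>i\<in>UNIV. (\<lambda>i s. sH P i * z$i * (\<Sum>m\<in>UNIV. Tul P (y$i) s i m + Tofld P s i m)
     + sE P * (\<Sum>m\<in>UNIV. z$i * (Eul P (y$i) s i m + Eofld P s i m))) i (v$i))"
      by (rule conv_coord_sum[OF cc, where S = "{0<..1}"]) (auto intro: p52_coord[OF st] yz simp: feas_coupled_def)
  qed (simp add: obj52_def sum.distrib sum_distrib_left)
  have c53: "convex_on (feas_coupled P) (\<lambda>f'. obj53 P t tau y b f' z)"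
  proof (rule convex_on_cong')
    show "convex_on (feas_coupled P) (\<lambda>v. \<Sum>i\<in>UNIV. (\<lambda>i s. sH P i *
        ((\<Sum>m\<in>UNIV. Tpl P (fTK P t tau s i) i m) / real (sK P)
         + z$i * (\<Sum>m\<in>UNIV. Tud P (y$i) s i m) + Texec P (z$i) s i)
     + sE P * ((\<Sum>m\<in>UNIV. Epl P (fTK P t tau s i) i m) / real (sK P)
         + (\<Sum>m\<in>UNIV. z$i * Eud P (y$i) s i m) + Eexec P (z$i) i)) i (v$i))"
      by (rule conv_coord_sum[OF cc, where S = "{0<..1}"]) (auto intro: p53_coord[OF st] yz simp: feas_coupled_def)
  qed (simp add: obj53_def sum.distrib distrib_left sum_distrib_left)
  have c54: "convex_on feas_unit (\<lambda>z'. obj54 P y b f z')"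
  proof (rule convex_on_cong')
    show "convex_on feas_unit (\<lambda>v. \<Sum>i\<in>UNIV. (\<lambda>i s. sH P i * (s * (\<Sum>m\<in>UNIV. Tul P (y$i) (b$i) i m + Tud P (y$i) (f$i) i m
                                             + Tofld P (b$i) i m) + Texec P s (f$i) i)
     + sE P * ((\<Sum>m\<in>UNIV. s * (Eul P (y$i) (b$i) i m + Eud P (y$i) (f$i) i m
                                             + Eofld P (b$i) i m)) + Eexec P s i)
     - sV P * acc P (y$i) s i) i (v$i))"
      by (rule conv_coord_sum[OF cu, where S = UNIV]) (auto intro: p54_coord)
  qed (simp add: obj54_def sum.distrib sum_subtractf distrib_left sum_distrib_left)
  show ?thesis by (intro conjI convex_unit cc c51 c52 c53 c54)
qed

end
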